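(* Consider the controlled system $\dot x = f(x)+g(x)u$, $y=h(x)$, with $x\in\mathbb{R}^{d_x}$, where $f,g,h$ are sufficiently many times differentiable, and let $\mathcal{S}\subset\mathbb{R}^{d_x}$ be open. Suppose that for some $j\in\{2,\dots,d_x\}$ the map $\mathbf{H}_j$ is an open map on $\mathcal{S}$. Then Property $\mathcal{B}(j)$ is satisfied.
   Context: $\mathbf{H}_i(x)=(h(x),L_fh(x),\dots,L_f^{i-1}h(x))\in\mathbb{R}^i$, where $L_f$ denotes the Lie derivative along $f$. Property $\mathcal{B}(j)$: for any $(x_a,x_b)\in\mathcal{S}^2$ with $x_a\ne x_b$ and $\mathbf{H}_j(x_a)=\mathbf{H}_j(x_b)$, there exists a sequence $(x_{a,k},x_{b,k})$ in $\mathcal{S}^2$ converging to $(x_a,x_b)$ such that for all $k$, $\mathbf{H}_j(x_{a,k})=\mathbf{H}_j(x_{b,k})$ and the Jacobian $\frac{\partial\mathbf{H}_{j-1}}{\partial x}$ has full rank (rank $j-1$) at $x_{a,k}$ or at $x_{b,k}$. *)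

theory Defs
  imports "HOL-Analysis.Analysis"
begin

fun Ck :: "nat \<Rightarrow> ('a::real_normed_vector \<Rightarrow> 'b::real_normed_vector) \<Rightarrow> bool" where
  "Ck 0 F = continuous_on UNIV F"
| "Ck (Suc k) F = (F differentiable_on UNIV \<and> (\<forall>v. Ck k (\<lambda>x. frechet_derivative F (at x) v)))"

definition smooth :: "('a::real_normed_vector \<Rightarrow> 'b::real_normed_vector) \<Rightarrow> bool" where
  "smooth F \<longleftrightarrow> (\<forall>k. Ck k F)"

definition lie :: "(real^'n \<Rightarrow> real^'n) \<Rightarrow> (real^'n \<Rightarrow> real) \<Rightarrow> real^'n \<Rightarrow> real" where
  "lie f phi x = frechet_derivative phi (at x) (f x)"

definition lie_iter :: "(real^'n \<Rightarrow> real^'n) \<Rightarrow> nat \<Rightarrow> (real^'n \<Rightarrow> real) \<Rightarrow> real^'n \<Rightarrow> real" where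
  "lie_iter f k h = (lie f ^^ k) h"

text \<open>H_i(x) = (h(x), L_f h(x), ..., L_f^(i-1) h(x)) in R^i, represented as a function
  nat => real whose coordinates 0..i-1 are the entries and which vanishes from index i on.\<close>
definition Hmap :: "(real^'n \<Rightarrow> real^'n) \<Rightarrow> (real^'n \<Rightarrow> real) \<Rightarrow> nat \<Rightarrow> real^'n \<Rightarrow> (nat \<Rightarrow> real)" where
  "Hmap f h i x = (\<lambda>k. if k < i then lie_iter f k h x else 0)"

definition Rvec :: "nat \<Rightarrow> (nat \<Rightarrow> real) set" where
  "Rvec i = {w. \<forall>k\<ge>i. w k = 0}"

definition open_Rvec :: "nat \<Rightarrow> (nat \<Rightarrow> real) set \<Rightarrow> bool" where
  "open_Rvec i V \<longleftrightarrow> V \<subseteq> Rvec i \<and>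
     (\<forall>v\<in>V. \<exists>e>0. \<forall>w\<in>Rvec i. sqrt (\<Sum>k<i. (w k - v k)\<^sup>2) < e \<longrightarrow> w \<in> V)"

definition open_map_on :: "(real^'n \<Rightarrow> real^'n) \<Rightarrow> (real^'n \<Rightarrow> real) \<Rightarrow> nat \<Rightarrow> (real^'n) set \<Rightarrow> bool" where
  "open_map_on f h i S \<longleftrightarrow> (\<forall>U. open U \<and> U \<subseteq> S \<longrightarrow> open_Rvec i (Hmap f h i ` U))"

definition grad :: "(real^'n \<Rightarrow> real) \<Rightarrow> real^'n \<Rightarrow> real^'n" where
  "grad phi x = (\<chi> m. frechet_derivative phi (at x) (axis m 1))"

definition jac_rank :: "(real^'n \<Rightarrow> real^'n) \<Rightarrow> (real^'n \<Rightarrow> real) \<Rightarrow> nat \<Rightarrow> real^'n \<Rightarrow> nat" where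
  "jac_rank f h i x = dim (span ((\<lambda>k. grad (lie_iter f k h) x) ` {..<i}))"

definition property_B :: "(real^'n \<Rightarrow> real^'n) \<Rightarrow> (real^'n \<Rightarrow> real) \<Rightarrow> (real^'n) set \<Rightarrow> nat \<Rightarrow> bool" where
  "property_B f h S j \<longleftrightarrow>
    (\<forall>xa\<in>S. \<forall>xb\<in>S. xa \<noteq> xb \<and> Hmap f h j xa = Hmap f h j xb \<longrightarrow>
       (\<exists>sa sb. (\<forall>k. sa k \<in> S \<and> sb k \<in> S) \<and> sa \<longlonglongrightarrow> xa \<and> sb \<longlonglongrightarrow> xb \<and>
          (\<forall>k. Hmap f h j (sa k) = Hmap f h j (sb k) \<and>
               (jac_rank f h (j - 1) (sa k) = j - 1 \<or> jac_rank f h (j - 1) (sb k) = j - 1))))"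

end

theory Submission
  imports Defs
begin


lemma Ck_diff: "Ck (Suc k) F \<Longrightarrow> (F has_derivative frechet_derivative F (at x)) (at x)"
  by (simp add: differentiable_on_def frechet_derivative_works)

lemma Ck_Suc_D: "Ck (Suc k) F \<Longrightarrow> Ck k (\<lambda>x. frechet_derivative F (at x) v)"
  by simp

lemma Ck_mono: "Ck (Suc k) F \<Longrightarrow> Ck k F"
proof (induction k arbitrary: F)
  case 0
  then show ?case
    by (simp add: differentiable_imp_continuous_on)
next
  case (Suc k)
  then show ?case by (metis Ck.simps(2))
qed

lemma Ck_cong: "Ck k F \<Longrightarrow> (\<And>x. F x = G x) \<Longrightarrow> Ck k G"
proof -
  assume "Ck k F" "\<And>x. F x = G x"
  then have "F = G" by auto
  then show ?thesis using \<open>Ck k F\<close> by simp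
qed

lemma Ck_const: "Ck k (\<lambda>x. c)"
proof (induction k arbitrary: c)
  case 0 then show ?case by simp
next
  case (Suc k)
  have "frechet_derivative (\<lambda>x. c) (at x) v = 0" for x v
    using fun_cong[OF frechet_derivative_at[OF has_derivative_const[of c "at x"]], of v] by simp
  then show ?case using Suc by (simp add: Ck_cong)
qed

lemma Ck_linear:
  fixes l :: "'b::real_normed_vector \<Rightarrow> 'c::real_normed_vector"
  assumes "bounded_linear l"
  shows "Ck k F \<Longrightarrow> Ck k (\<lambda>x. l (F x))"
proof (induction k arbitrary: F)
  case 0
  then show ?case
    using assms by (auto intro: continuous_on_compose2[of UNIV l] linear_continuous_on)
next
  case (Suc k)
  have d: "((\<lambda>x. l (F x)) has_derivative (\<lambda>v. l (frechet_derivative F (at x) v))) (at x)" for x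
    using bounded_linear.has_derivative[OF assms Ck_diff[OF Suc.prems]] .
  then have "frechet_derivative (\<lambda>x. l (F x)) (at x) v = l (frechet_derivative F (at x) v)" for x v
    using fun_cong[OF frechet_derivative_at[OF d[of x]], of v] by simp
  moreover have "(\<lambda>x. l (F x)) differentiable_on UNIV"
    using d by (auto simp: differentiable_on_def differentiable_def)
  ultimately show ?case using Suc by (auto intro: Ck_cong)
qed

lemma Ck_add:
  fixes F G :: "'a::real_normed_vector \<Rightarrow> 'b::real_normed_vector"
  shows "Ck k F \<Longrightarrow> Ck k G \<Longrightarrow> Ck k (\<lambda>x. F x + G x)"
proof (induction k arbitrary: F G)
  case 0
  then show ?case by (auto intro: continuous_on_add)
next
  case (Suc k)
  have d: "((\<lambda>x. F x + G x) has_derivative (\<lambda>v. frechet_derivative F (at x) v + frechet_derivative G (at x) v)) (at x)" for x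
    using has_derivative_add[OF Ck_diff[OF Suc.prems(1)] Ck_diff[OF Suc.prems(2)]] .
  then have "frechet_derivative (\<lambda>x. F x + G x) (at x) v = frechet_derivative F (at x) v + frechet_derivative G (at x) v" for x v
    using fun_cong[OF frechet_derivative_at[OF d[of x]], of v] by simp
  moreover have "(\<lambda>x. F x + G x) differentiable_on UNIV"
    using d by (auto simp: differentiable_on_def differentiable_def)
  ultimately show ?case using Suc by (auto intro: Ck_cong)
qed

lemma Ck_mult:
  fixes F G :: "'a::real_normed_vector \<Rightarrow> real"
  shows "Ck k F \<Longrightarrow> Ck k G \<Longrightarrow> Ck k (\<lambda>x. F x * G x)"
proof (induction k arbitrary: F G)
  case 0
  then show ?case by (auto intro: continuous_on_mult)
next
  case (Suc k)
  have d: "((\<lambda>x. F x * G x) has_derivative (\<lambda>v. F x * frechet_derivative G (at x) v + frechet_derivative F (at x) v * G x)) (at x)" for x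
    using has_derivative_mult[OF Ck_diff[OF Suc.prems(1)] Ck_diff[OF Suc.prems(2)]] .
  then have "frechet_derivative (\<lambda>x. F x * G x) (at x) v = F x * frechet_derivative G (at x) v + frechet_derivative F (at x) v * G x" for x v
    using fun_cong[OF frechet_derivative_at[OF d[of x]], of v] by simp
  moreover have "(\<lambda>x. F x * G x) differentiable_on UNIV"
    using d by (auto simp: differentiable_on_def differentiable_def)
  moreover have "Ck k (\<lambda>x. F x * frechet_derivative G (at x) v + frechet_derivative F (at x) v * G x)" for v
    using Suc.IH[OF Ck_mono[OF Suc.prems(1)] Ck_Suc_D[OF Suc.prems(2), of v]]
      Suc.IH[OF Ck_Suc_D[OF Suc.prems(1), of v] Ck_mono[OF Suc.prems(2)]] by (rule Ck_add)
  ultimately show ?case by (auto intro: Ck_cong)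
qed

lemma Ck_sum:
  fixes F :: "'i \<Rightarrow> 'a::real_normed_vector \<Rightarrow> 'b::real_normed_vector"
  shows "(\<And>i. i \<in> A \<Longrightarrow> Ck k (F i)) \<Longrightarrow> Ck k (\<lambda>x. \<Sum>i\<in>A. F i x)"
proof (induction A rule: infinite_finite_induct)
  case (infinite A) then show ?case by (simp add: Ck_const)
next
  case empty then show ?case by (simp add: Ck_const)
next
  case (insert a A)
  then show ?case by (simp add: Ck_add)
qed

lemma smooth_mult: "smooth F \<Longrightarrow> smooth G \<Longrightarrow> smooth (\<lambda>x. F x * (G x::real))"
  by (simp add: smooth_def Ck_mult)

lemma smooth_deriv: "smooth F \<Longrightarrow> smooth (\<lambda>x. frechet_derivative F (at x) v)"
  unfolding smooth_def by (metis Ck.simps(2))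

lemma smooth_lie:
  fixes f :: "real^'n \<Rightarrow> real^'n"
  assumes f: "smooth f" and p: "smooth phi"
  shows "smooth (lie f phi)"
proof -
  have lin: "linear (frechet_derivative phi (at x))" for x
  proof -
    have "Ck (Suc 0) phi" using p unfolding smooth_def by blast
    from has_derivative_linear[OF Ck_diff[OF this]] show ?thesis .
  qed
  have eq: "lie f phi x = (\<Sum>i\<in>UNIV. f x $ i * frechet_derivative phi (at x) (axis i 1))" for x
  proof -
    have "lie f phi x = frechet_derivative phi (at x) (\<Sum>i\<in>UNIV. f x $ i *\<^sub>R axis i 1)"
      unfolding lie_def by (metis basis_expansion scalar_mult_eq_scaleR)
    also have "\<dots> = (\<Sum>i\<in>UNIV. f x $ i * frechet_derivative phi (at x) (axis i 1))"
      using lin by (simp add: linear_sum linear_scale)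
    finally show ?thesis .
  qed
  have "smooth (\<lambda>x. f x $ i)" for i
    using f by (simp add: smooth_def Ck_linear[OF bounded_linear_vec_nth])
  then have "smooth (\<lambda>x. \<Sum>i\<in>UNIV. f x $ i * frechet_derivative phi (at x) (axis i 1))"
    using smooth_deriv[OF p] unfolding smooth_def
    by (intro allI Ck_sum) (simp add: Ck_mult)
  moreover have "lie f phi = (\<lambda>x. \<Sum>i\<in>UNIV. f x $ i * frechet_derivative phi (at x) (axis i 1))"
    using eq by (intro ext)
  ultimately show ?thesis by simp
qed

lemma smooth_lie_iter:
  fixes f :: "real^'n \<Rightarrow> real^'n"
  assumes "smooth f" "smooth h"
  shows "smooth (lie_iter f k h)"
  unfolding lie_iter_def
  by (induction k) (simp_all add: assms smooth_lie)



lemma grad_deriv: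
  fixes phi :: "real^'n \<Rightarrow> real"
  assumes "smooth phi"
  shows "(phi has_derivative (\<lambda>v. grad phi x \<bullet> v)) (at x)"
proof -
  have c1: "Ck (Suc 0) phi" using assms unfolding smooth_def by blast
  have d: "(phi has_derivative frechet_derivative phi (at x)) (at x)" using Ck_diff[OF c1] .
  have lin: "linear (frechet_derivative phi (at x))" using has_derivative_linear[OF d] .
  have "frechet_derivative phi (at x) v = grad phi x \<bullet> v" for v
  proof -
    have "frechet_derivative phi (at x) v = frechet_derivative phi (at x) (\<Sum>i\<in>UNIV. v $ i *\<^sub>R axis i 1)"
      by (metis basis_expansion scalar_mult_eq_scaleR)
    also have "\<dots> = (\<Sum>i\<in>UNIV. v $ i * frechet_derivative phi (at x) (axis i 1))"
      using lin by (simp add: linear_sum linear_scale)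
    also have "\<dots> = grad phi x \<bullet> v"
      by (simp add: grad_def inner_vec_def mult.commute)
    finally show ?thesis .
  qed
  then have "frechet_derivative phi (at x) = (\<lambda>v. grad phi x \<bullet> v)" by (intro ext)
  then show ?thesis using d by simp
qed

lemma grad_cont:
  fixes phi :: "real^'n \<Rightarrow> real"
  assumes "smooth phi"
  shows "continuous_on UNIV (grad phi)"
proof -
  have "Ck 0 (\<lambda>x. frechet_derivative phi (at x) (axis m 1))" for m
    using smooth_deriv[OF assms] unfolding smooth_def by blast
  then show ?thesis unfolding grad_def by (intro continuous_on_vec_lambda) simp
qed

lemma indep_dual:
  fixes G :: "'k \<Rightarrow> 'a::real_inner"
  assumes fin: "finite K"
    and dual: "\<And>k. k \<in> K \<Longrightarrow> \<exists>w. \<forall>k'\<in>K. G k' \<bullet> w = (if k' = k then 1 else 0)"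
  shows "independent (G ` K)" "inj_on G K"
proof -
  show inj: "inj_on G K"
  proof (rule inj_onI)
    fix a b assume ab: "a \<in> K" "b \<in> K" "G a = G b"
    obtain w where w: "\<forall>k'\<in>K. G k' \<bullet> w = (if k' = a then 1 else 0)" using dual ab(1) by blast
    from w ab show "a = b" by (metis zero_neq_one)
  qed
  show "independent (G ` K)"
  proof (rule real_vector.independent_if_scalars_zero)
    show "finite (G ` K)" using fin by simp
    fix c :: "'a \<Rightarrow> real" and b0 assume s: "(\<Sum>b\<in>G ` K. c b *\<^sub>R b) = 0" and b0: "b0 \<in> G ` K"
    then obtain k0 where k0: "k0 \<in> K" "b0 = G k0" by blast
    obtain w where w: "\<forall>k'\<in>K. G k' \<bullet> w = (if k' = k0 then 1 else 0)" using dual k0(1) by blast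
    have bw: "b \<bullet> w = (if b = b0 then 1 else 0)" if bmem: "b \<in> G ` K" for b
    proof -
      obtain k where "k \<in> K" "b = G k" using bmem by blast
      then show ?thesis using w k0 inj by (auto simp: inj_on_def)
    qed
    have "0 = (\<Sum>b\<in>G ` K. c b *\<^sub>R b) \<bullet> w" using s by simp
    also have "\<dots> = (\<Sum>b\<in>G ` K. c b * (b \<bullet> w))" by (simp add: inner_sum_left)
    also have "\<dots> = (\<Sum>b\<in>G ` K. (if b = b0 then c b else 0))"
      by (intro sum.cong) (auto simp: bw)
    also have "\<dots> = c b0" using b0 fin by simp
    finally show "c b0 = 0" by simp
  qed
qed



lemma hd_vec:
  fixes f :: "'a::real_normed_vector \<Rightarrow> real^'n"
  assumes "\<And>i. ((\<lambda>x. f x $ i) has_derivative (\<lambda>v. f' v $ i)) (at x within S)"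
  shows "(f has_derivative f') (at x within S)"
proof -
  have "((\<lambda>x. f x \<bullet> b) has_derivative (\<lambda>v. f' v \<bullet> b)) (at x within S)" if bB: "b \<in> Basis" for b
  proof -
    obtain i where b: "b = axis i 1" using bB by (auto simp: Basis_vec_def)
    show ?thesis using assms[of i] by (simp add: b inner_axis)
  qed
  then show ?thesis by (subst has_derivative_componentwise_within) blast
qed

lemma diff_vec:
  fixes f :: "'a::real_normed_vector \<Rightarrow> real^'n"
  assumes "\<And>i. (\<lambda>x. f x $ i) differentiable (at x within S)"
  shows "f differentiable (at x within S)"
proof -
  have "(\<lambda>x. f x \<bullet> b) differentiable (at x within S)" if bB: "b \<in> Basis" for b
  proof -
    obtain i where b: "b = axis i 1" using bB by (auto simp: Basis_vec_def)
    show ?thesis using assms[of i] by (simp add: b inner_axis)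
  qed
  then show ?thesis by (subst differentiable_componentwise_within) blast
qed

lemma Basis_cart_axis: "b \<in> (Basis :: (real^'n) set) \<Longrightarrow> \<exists>i. b = axis i 1"
  by (auto simp: Basis_vec_def)



lemma card_Compl': "card (- (A::'n::finite set)) = CARD('n) - card A"
  by (simp add: Compl_eq_Diff_UNIV card_Diff_subset)

lemma core:
  fixes phi :: "nat \<Rightarrow> real^'n \<Rightarrow> real" and g :: "nat \<Rightarrow> real^'n \<Rightarrow> real^'n"
  assumes der: "\<And>k x. (phi k has_derivative (\<lambda>v. g k x \<bullet> v)) (at x)"
    and cont: "\<And>k. continuous_on UNIV (g k)"
    and U: "open U" "x0 \<in> U"
    and rk: "\<And>x. x \<in> U \<Longrightarrow> dim ((\<lambda>k. g k x) ` {..<m}) < m"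
    and mn: "m \<le> CARD('n)"
    and opn: "\<And>U' z. open U' \<Longrightarrow> U' \<subseteq> U \<Longrightarrow> z \<in> U' \<Longrightarrow>
       \<exists>e>0. \<forall>w\<in>Rvec m. sqrt (\<Sum>k<m. (w k - phi k z)\<^sup>2) < e \<longrightarrow>
          w \<in> (\<lambda>x. \<lambda>k. if k < m then phi k x else 0) ` U'"
  shows False
proof -
  define \<rho> where "\<rho> x = dim ((\<lambda>k. g k x) ` {..<m})" for x
  have \<rho>le: "\<rho> x \<le> m" for x
    unfolding \<rho>_def by (metis card_image_le card_lessThan dim_le_card' finite_imageI finite_lessThan order_trans)
  have finr: "finite (\<rho> ` U)"
    by (rule finite_subset[of _ "{..m}"]) (auto simp: \<rho>le)
  define r where "r = Max (\<rho> ` U)"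
  obtain x1 where x1: "x1 \<in> U" "\<rho> x1 = r"
    using Max_in[OF finr] U(2) unfolding r_def by fastforce
  have rmax: "\<rho> x \<le> r" if "x \<in> U" for x
    unfolding r_def using finr that by simp
  have rm: "r < m" using rk[OF x1(1)] x1(2) by (simp add: \<rho>_def)
  define V1 where "V1 = (\<lambda>k. g k x1) ` {..<m}"
  obtain B where B: "B \<subseteq> V1" "independent B" "V1 \<subseteq> span B" "card B = dim V1"
    using basis_exists by blast
  have cardB: "card B = r" using B(4) x1(2) by (simp add: \<rho>_def V1_def)
  define s where "s b = (SOME k. k < m \<and> g k x1 = b)" for b
  have s: "s b < m \<and> g (s b) x1 = b" if "b \<in> B" for b
  proof -
    have "\<exists>k. k < m \<and> g k x1 = b" using that B(1) unfolding V1_def by auto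
    then show ?thesis unfolding s_def by (rule someI_ex)
  qed
  define K where "K = s ` B"
  have Km: "K \<subseteq> {..<m}" using s unfolding K_def by auto
  have finK: "finite K" using Km finite_subset by blast
  have injs: "inj_on s B" by (metis inj_onI s)
  have cardK: "card K = r" unfolding K_def using card_image[OF injs] cardB by simp
  have gK: "(\<lambda>k. g k x1) ` K = B" unfolding K_def using s by (force simp: image_image)
  obtain B' where B': "B \<subseteq> B'" "B' \<subseteq> B \<union> Basis" "independent B'" "B \<union> Basis \<subseteq> span B'"
    using maximal_independent_subset_extend[of B "B \<union> Basis"] B(2) by blast
  have spanB': "UNIV \<subseteq> span B'"
    using B'(4) span_Basis by (metis le_sup_iff span_minimal subspace_span)
  have cardB': "card B' = CARD('n)"
    using basis_card_eq_dim[OF _ spanB' B'(3)] by simp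
  have finB': "finite B'" using B'(3) finiteI_independent by blast
  define L where "L = {i. axis i (1::real) \<in> B' - B}"
  have BL: "B' - B = (\<lambda>i. axis i 1) ` L"
  proof
    show "B' - B \<subseteq> (\<lambda>i. axis i 1) ` L"
      using B'(2) by (auto simp: L_def Basis_vec_def)
    show "(\<lambda>i. axis i 1) ` L \<subseteq> B' - B" unfolding L_def by auto
  qed
  have injax: "inj (\<lambda>i::'n. axis i (1::real))" by (auto simp: inj_def axis_eq_axis)
  have cardL: "card L = CARD('n) - r"
  proof -
    have "card (B' - B) = card B' - card B" using B'(1) finB' by (meson card_Diff_subset finite_subset)
    moreover have "card (B' - B) = card L" using BL card_image injax by (metis inj_on_subset subset_UNIV)
    ultimately show ?thesis using cardB' cardB by simp
  qed
  define I where "I = - L"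
  have cardI: "card I = r"
  proof -
    have "card I = CARD('n) - card L" unfolding I_def by (simp add: card_Compl')
    then show ?thesis using cardL cardB cardB' B'(1) finB'
      by (metis card_mono diff_diff_cancel)
  qed
  obtain \<gamma> where \<gamma>: "bij_betw \<gamma> K I"
    using finite_same_card_bij[OF finK _ ] cardK cardI by (metis finite)
  define \<delta> where "\<delta> = the_inv_into K \<gamma>"
  have \<delta>: "bij_betw \<delta> I K" unfolding \<delta>_def using bij_betw_the_inv_into[OF \<gamma>] .
  have \<gamma>\<delta>: "\<gamma> (\<delta> i) = i" if "i \<in> I" for i
    unfolding \<delta>_def using f_the_inv_into_f_bij_betw[OF \<gamma>] that by blast
  have \<delta>\<gamma>: "\<delta> (\<gamma> k) = k" if "k \<in> K" for k
    unfolding \<delta>_def using the_inv_into_f_f[OF bij_betw_imp_inj_on[OF \<gamma>] that] .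
  have \<gamma>I: "\<gamma> k \<in> I" if "k \<in> K" for k using \<gamma> that by (auto simp: bij_betw_def)
  have \<delta>K: "\<delta> i \<in> K" if "i \<in> I" for i using \<delta> that by (auto simp: bij_betw_def)
  define \<Phi> where "\<Phi> x = (\<chi> i. if i \<in> I then phi (\<delta> i) x else x $ i)" for x
  define \<Phi>' where "\<Phi>' x v = (\<chi> i. if i \<in> I then g (\<delta> i) x \<bullet> v else v $ i)" for x v
  have der\<Phi>: "(\<Phi> has_derivative \<Phi>' x) (at x)" for x
  proof (rule hd_vec)
    fix i
    show "((\<lambda>x. \<Phi> x $ i) has_derivative (\<lambda>v. \<Phi>' x v $ i)) (at x within UNIV)"
    proof (cases "i \<in> I")
      case True
      then show ?thesis using der[of "\<delta> i" x] by (simp add: \<Phi>_def \<Phi>'_def)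
    next
      case False
      then show ?thesis
        by (simp add: \<Phi>_def \<Phi>'_def bounded_linear_imp_has_derivative bounded_linear_vec_nth)
    qed
  qed
  have bl\<Phi>': "bounded_linear (\<Phi>' x)" for x using has_derivative_bounded_linear[OF der\<Phi>] .
  define \<Phi>L where "\<Phi>L x = Blinfun (\<Phi>' x)" for x
  have \<Phi>L: "blinfun_apply (\<Phi>L x) = \<Phi>' x" for x
    unfolding \<Phi>L_def using bl\<Phi>' bounded_linear_Blinfun_apply by blast
  have cont\<Phi>L: "continuous_on U \<Phi>L"
  proof (rule continuous_on_blinfun_componentwise)
    fix b :: "real^'n"
    have "continuous_on U (\<lambda>x. \<Phi>' x b)"
      unfolding \<Phi>'_def
    proof (intro continuous_on_vec_lambda)
      fix i
      show "continuous_on U (\<lambda>x. if i \<in> I then g (\<delta> i) x \<bullet> b else b $ i)"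
      proof (cases "i \<in> I")
        case True
        have "continuous_on U (g (\<delta> i))" using continuous_on_subset[OF cont] by blast
        then show ?thesis using True by (simp add: continuous_on_inner continuous_on_const)
      qed simp
    qed
    then show "continuous_on U (\<lambda>x. blinfun_apply (\<Phi>L x) b)" by (simp add: \<Phi>L)
  qed
  have lin1: "linear (\<Phi>' x1)" using bl\<Phi>' bounded_linear.linear by blast
  have inj1: "inj (\<Phi>' x1)"
  proof -
    have "v = 0" if v: "\<Phi>' x1 v = 0" for v
    proof -
      have "orthogonal v b" if bB': "b \<in> B'" for b
      proof (cases "b \<in> B")
        case True
        then obtain k where k: "k \<in> K" "b = g k x1" using gK by blast
        have "\<Phi>' x1 v $ (\<gamma> k) = 0" using v by simp
        then show ?thesis using k \<gamma>I \<delta>\<gamma> by (simp add: \<Phi>'_def orthogonal_def inner_commute)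
      next
        case False
        then obtain i where i: "i \<in> L" "b = axis i 1" using bB' BL by blast
        have "\<Phi>' x1 v $ i = 0" using v by simp
        then show ?thesis using i by (simp add: \<Phi>'_def I_def orthogonal_def inner_axis)
      qed
      then have "orthogonal v v" using spanB' by (meson orthogonal_to_span subsetD UNIV_I)
      then show ?thesis by (simp add: orthogonal_self)
    qed
    then show ?thesis using lin1 linear_injective_0 by blast
  qed
  obtain gi where gi: "linear gi" "gi \<circ> \<Phi>' x1 = id"
    using linear_injective_left_inverse[OF lin1 inj1] by blast
  define invf where "invf = Blinfun gi"
  have invf: "invf o\<^sub>L \<Phi>L x1 = id_blinfun"
  proof (rule blinfun_eqI)
    fix v
    have "blinfun_apply invf = gi" unfolding invf_def
      using gi(1) bounded_linear_Blinfun_apply linear_conv_bounded_linear by blast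
    then show "blinfun_apply (invf o\<^sub>L \<Phi>L x1) v = blinfun_apply id_blinfun v"
      using gi(2) by (simp add: \<Phi>L pointfree_idE)
  qed
  obtain U2 V \<Psi> \<Psi>' where U2: "open U2" "U2 \<subseteq> U" "x1 \<in> U2" and V: "open V" "\<Phi> x1 \<in> V"
    and hom: "homeomorphism U2 V \<Phi> \<Psi>"
    and der\<Psi>: "\<And>y. y \<in> V \<Longrightarrow> (\<Psi> has_derivative (\<Psi>' y)) (at y)"
    and \<Psi>': "\<And>y. y \<in> V \<Longrightarrow> \<Psi>' y = inv (blinfun_apply (\<Phi>L (\<Psi> y)))"
    and bij: "\<And>y. y \<in> V \<Longrightarrow> bij (blinfun_apply (\<Phi>L (\<Psi> y)))"
  proof (rule inverse_function_theorem[OF U(1) _ cont\<Phi>L x1(1) invf])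
    show "(\<Phi> has_derivative blinfun_apply (\<Phi>L x)) (at x)" for x using der\<Phi> by (simp add: \<Phi>L)
  qed blast
  have \<Psi>V: "\<Psi> y \<in> U2" if "y \<in> V" for y using hom that unfolding homeomorphism_def by blast
  have \<Psi>\<Phi>: "\<Psi> (\<Phi> x) = x" if "x \<in> U2" for x using hom that unfolding homeomorphism_def by blast
  have \<Phi>\<Psi>: "\<Phi> (\<Psi> y) = y" if "y \<in> V" for y using hom that unfolding homeomorphism_def by blast
  text \<open>the key: derivative of phi l o Psi vanishes on directions z with z supported off I\<close>
  have dz: "g l (\<Psi> y) \<bullet> \<Psi>' y z = 0" if y: "y \<in> V" and l: "l < m" and z: "\<forall>i\<in>I. z $ i = 0" for y l z
  proof -
    define x where "x = \<Psi> y"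
    have xU: "x \<in> U" using \<Psi>V[OF y] U2(2) x_def by blast
    have bx: "bij (\<Phi>' x)" using bij[OF y] by (simp add: \<Phi>L x_def)
    have fi: "\<Phi>' x (inv (\<Phi>' x) t) = t" for t using bx by (meson bij_inv_eq_iff)
    have dual: "\<exists>w. \<forall>k'\<in>K. g k' x \<bullet> w = (if k' = k then 1 else 0)" if k: "k \<in> K" for k
    proof (intro exI ballI)
      fix k' assume k': "k' \<in> K"
      have "\<Phi>' x (inv (\<Phi>' x) (axis (\<gamma> k) 1)) $ (\<gamma> k') = axis (\<gamma> k) 1 $ (\<gamma> k')" by (simp add: fi)
      moreover have "(\<gamma> k' = \<gamma> k) = (k' = k)" using \<gamma> k k' by (auto simp: bij_betw_def inj_on_def)
      ultimately show "g k' x \<bullet> inv (\<Phi>' x) (axis (\<gamma> k) 1) = (if k' = k then 1 else 0)"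
        using k' \<gamma>I \<delta>\<gamma> by (simp add: \<Phi>'_def axis_def)
    qed
    have ind: "independent ((\<lambda>k. g k x) ` K)" and injg: "inj_on (\<lambda>k. g k x) K"
      using indep_dual[OF finK dual] by auto
    have "(\<lambda>k. g k x) ` {..<m} \<subseteq> span ((\<lambda>k. g k x) ` K)"
    proof (rule card_ge_dim_independent)
      show "(\<lambda>k. g k x) ` K \<subseteq> (\<lambda>k. g k x) ` {..<m}" using Km by blast
      show "independent ((\<lambda>k. g k x) ` K)" by fact
      show "dim ((\<lambda>k. g k x) ` {..<m}) \<le> card ((\<lambda>k. g k x) ` K)"
        using rmax[OF xU] card_image[OF injg] cardK by (simp add: \<rho>_def)
    qed
    then have gl: "g l x \<in> span ((\<lambda>k. g k x) ` K)" using l by blast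
    define v where "v = \<Psi>' y z"
    have v: "\<Phi>' x v = z" using \<Psi>'[OF y] fi by (simp add: v_def \<Phi>L x_def)
    have "orthogonal v b" if bK: "b \<in> (\<lambda>k. g k x) ` K" for b
    proof -
      obtain k where k: "k \<in> K" "b = g k x" using bK by blast
      have "\<Phi>' x v $ (\<gamma> k) = 0" using v z \<gamma>I[OF k(1)] by simp
      then show ?thesis using k \<gamma>I \<delta>\<gamma> by (simp add: \<Phi>'_def orthogonal_def inner_commute)
    qed
    then have "orthogonal v (g l x)" using gl orthogonal_to_span by blast
    then show ?thesis by (simp add: orthogonal_def inner_commute v_def x_def)
  qed
  define y1 where "y1 = \<Phi> x1"
  have \<Psi>y1: "\<Psi> y1 = x1" using \<Psi>\<Phi>[OF U2(3)] y1_def by simp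
  obtain d0 where d0: "d0 > 0" "ball y1 d0 \<subseteq> V" using V openE y1_def by metis
  define \<sigma> where "\<sigma> y = (\<chi> i. if i \<in> I then y $ i else y1 $ i)" for y
  have \<sigma>ball: "\<sigma> y \<in> ball y1 d0" if "y \<in> ball y1 d0" for y
  proof -
    have "norm (y1 - \<sigma> y) \<le> norm (y1 - y)"
      by (rule norm_le_componentwise_cart) (simp add: \<sigma>_def)
    then show ?thesis using that by (simp add: dist_norm)
  qed
  have const: "phi l (\<Psi> y) = phi l (\<Psi> (\<sigma> y))" if y: "y \<in> ball y1 d0" and l: "l < m" for y l
  proof -
    define d where "d = y - \<sigma> y"
    define p where "p t = \<sigma> y + t *\<^sub>R d" for t :: real
    have dI: "\<forall>i\<in>I. d $ i = 0" by (simp add: d_def \<sigma>_def)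
    have pball: "p t \<in> ball y1 d0" if "t \<in> {0..1}" for t
    proof -
      have "p t = (1 - t) *\<^sub>R \<sigma> y + t *\<^sub>R y" by (simp add: p_def d_def algebra_simps)
      then show ?thesis using that convex_ball[of y1 d0] \<sigma>ball[OF y] y
        by (auto simp: convex_def)
    qed
    have "((\<lambda>t. phi l (\<Psi> (p t))) has_derivative (\<lambda>s. 0)) (at t within {0..1})" if t: "t \<in> {0..1}" for t
    proof -
      have pV: "p t \<in> V" using pball[OF t] d0(2) by blast
      have dp: "(p has_derivative (\<lambda>s. s *\<^sub>R d)) (at t)"
        unfolding p_def by (auto intro!: derivative_eq_intros)
      have d1: "((\<lambda>t. \<Psi> (p t)) has_derivative (\<lambda>s. \<Psi>' (p t) (s *\<^sub>R d))) (at t)"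
        using diff_chain_at[OF dp der\<Psi>[OF pV]] by (simp add: o_def)
      have dc: "((\<lambda>t. phi l (\<Psi> (p t))) has_derivative (\<lambda>s. g l (\<Psi> (p t)) \<bullet> \<Psi>' (p t) (s *\<^sub>R d))) (at t)"
        using diff_chain_at[OF d1 der[of l "\<Psi> (p t)"]]
        by (simp add: o_def)
      have lin: "linear (\<Psi>' (p t))" using der\<Psi>[OF pV] has_derivative_linear by blast
      have "g l (\<Psi> (p t)) \<bullet> \<Psi>' (p t) (s *\<^sub>R d) = 0" for s
        using dz[OF pV l dI] lin by (simp add: linear_scale)
      then show ?thesis using dc has_derivative_at_withinI by fastforce
    qed
    then obtain c where c: "\<forall>t\<in>{0..1}. phi l (\<Psi> (p t)) = c"
      using has_derivative_zero_constant[of "{0..1::real}"] by (metis convex_real_interval(5))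
    have "phi l (\<Psi> (p 1)) = phi l (\<Psi> (p 0))" using c by simp
    then show ?thesis by (simp add: p_def d_def)
  qed
  define W0 where "W0 = \<Psi> ` ball y1 d0"
  have W0eq: "W0 = U2 \<inter> \<Phi> -` ball y1 d0"
  proof
    show "W0 \<subseteq> U2 \<inter> \<Phi> -` ball y1 d0"
      unfolding W0_def using \<Psi>V \<Phi>\<Psi> d0(2) by auto
    show "U2 \<inter> \<Phi> -` ball y1 d0 \<subseteq> W0"
      unfolding W0_def using \<Psi>\<Phi> by (metis (no_types, lifting) Int_iff image_eqI subsetI vimage_eq)
  qed
  have "continuous_on U2 \<Phi>" using hom unfolding homeomorphism_def by blast
  then have oW0: "open W0" using W0eq continuous_open_preimage[OF _ U2(1) open_ball] by metis
  have W0U: "W0 \<subseteq> U" using W0eq U2(2) by blast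
  have x1W0: "x1 \<in> W0" unfolding W0_def using \<Psi>y1 d0(1) by (metis centre_in_ball imageI)
  obtain e where e: "e > 0" "\<forall>w\<in>Rvec m. sqrt (\<Sum>k<m. (w k - phi k x1)\<^sup>2) < e \<longrightarrow>
          w \<in> (\<lambda>x. \<lambda>k. if k < m then phi k x else 0) ` W0"
    using opn[OF oW0 W0U x1W0] by blast
  have "card (- I) = CARD('n) - r" using cardI by (simp add: card_Compl')
  then have "m - r \<le> card (- I)" using mn by simp
  then obtain T where T: "T \<subseteq> - I" "card T = m - r" "finite T"
    using obtain_subset_with_card_n by blast
  define J where "J = I \<union> T"
  have cardJ: "card J = m"
  proof -
    have "I \<inter> T = {}" using T(1) by blast
    then show ?thesis unfolding J_def
      using card_Un_disjoint[OF finite finite, of I T] T cardI rm by simp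
  qed
  have "T \<noteq> {}" using T(2) rm by auto
  then obtain i0 where i0: "i0 \<in> T" by blast
  obtain \<beta> where \<beta>: "bij_betw \<beta> J {..<m}"
    using finite_same_card_bij[of J "{..<m}"] cardJ by (metis card_lessThan finite finite_lessThan)
  define \<beta>i where "\<beta>i = the_inv_into J \<beta>"
  have \<beta>m: "\<beta> i < m" if "i \<in> J" for i using \<beta> that by (auto simp: bij_betw_def)
  have \<beta>i\<beta>: "\<beta>i (\<beta> i) = i" if "i \<in> J" for i
    unfolding \<beta>i_def using the_inv_into_f_f[OF bij_betw_imp_inj_on[OF \<beta>] that] .
  define \<Theta> where "\<Theta> u = (\<chi> i. if i \<in> J then phi (\<beta> i) (\<Psi> (\<sigma> u)) else u $ i)" for u
  define S1 where "S1 = {u. \<sigma> u \<in> ball y1 d0 \<and> u $ i0 = 0}"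
  have negS1: "negligible S1"
  proof (rule negligible_subset[OF negligible_hyperplane[of "axis i0 (1::real)" 0]])
    show "axis i0 (1::real) \<noteq> 0 \<or> (0::real) \<noteq> 0" by (simp add: axis_eq_0_iff)
    show "S1 \<subseteq> {x. axis i0 1 \<bullet> x = 0}" unfolding S1_def by (auto simp: inner_axis')
  qed
  have d\<sigma>: "(\<sigma> has_derivative (\<lambda>v. \<chi> i. if i \<in> I then v $ i else 0)) (at u)" for u
  proof (rule hd_vec)
    fix i
    show "((\<lambda>x. \<sigma> x $ i) has_derivative (\<lambda>v. (\<chi> i. if i \<in> I then v $ i else 0) $ i)) (at u within UNIV)"
      by (cases "i \<in> I") (simp_all add: \<sigma>_def bounded_linear_imp_has_derivative bounded_linear_vec_nth)
  qed
  have diff\<Theta>: "\<Theta> differentiable_on S1"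
    unfolding differentiable_on_def
  proof
    fix u assume u: "u \<in> S1"
    then have \<sigma>V: "\<sigma> u \<in> V" using d0(2) unfolding S1_def by blast
    show "\<Theta> differentiable at u within S1"
    proof (rule diff_vec)
      fix i
      show "(\<lambda>x. \<Theta> x $ i) differentiable at u within S1"
      proof (cases "i \<in> J")
        case True
        have d1: "((\<lambda>x. \<Psi> (\<sigma> x)) has_derivative (\<Psi>' (\<sigma> u) \<circ> (\<lambda>v. \<chi> i. if i \<in> I then v $ i else 0))) (at u)"
          using diff_chain_at[OF d\<sigma> der\<Psi>[OF \<sigma>V]] by (simp add: o_def)
        have "(\<lambda>x. phi (\<beta> i) (\<Psi> (\<sigma> x))) differentiable at u"
          using diff_chain_at[OF d1 der[of "\<beta> i" "\<Psi> (\<sigma> u)"]]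
          by (auto simp: o_def differentiable_def)
        then show ?thesis using True by (simp add: \<Theta>_def differentiable_at_withinI)
      next
        case False
        have "(\<lambda>x. x $ i) differentiable at u"
          using bounded_linear_imp_differentiable[OF bounded_linear_vec_nth] .
        then show ?thesis using False by (simp add: \<Theta>_def differentiable_at_withinI)
      qed
    qed
  qed
  have neg\<Theta>: "negligible (\<Theta> ` S1)"
    by (rule negligible_differentiable_image_negligible[OF _ negS1 diff\<Theta>]) simp
  define Ob where "Ob = {t::real^'n. (\<Sum>i\<in>J. (t $ i - phi (\<beta> i) x1)\<^sup>2) < e\<^sup>2}"
  have oO: "open Ob"
    unfolding Ob_def
    by (rule open_Collect_less) (intro continuous_intros linear_continuous_on bounded_linear_vec_nth)+
  define t0 where "t0 = (\<chi> i. if i \<in> J then phi (\<beta> i) x1 else 0)"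
  have "t0 \<in> Ob" unfolding Ob_def t0_def using e(1) by simp
  then have nO: "\<not> negligible Ob" using open_not_negligible[OF oO] by blast
  have "Ob \<subseteq> \<Theta> ` S1"
  proof
    fix t assume t: "t \<in> Ob"
    define w where "w k = (if k < m then t $ (\<beta>i k) else 0)" for k
    have sumeq: "(\<Sum>k<m. (w k - phi k x1)\<^sup>2) = (\<Sum>i\<in>J. (t $ i - phi (\<beta> i) x1)\<^sup>2)"
    proof -
      have "(\<Sum>i\<in>J. (w (\<beta> i) - phi (\<beta> i) x1)\<^sup>2) = (\<Sum>k<m. (w k - phi k x1)\<^sup>2)"
        by (rule sum.reindex_bij_betw[OF \<beta>])
      moreover have "(\<Sum>i\<in>J. (w (\<beta> i) - phi (\<beta> i) x1)\<^sup>2) = (\<Sum>i\<in>J. (t $ i - phi (\<beta> i) x1)\<^sup>2)"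
        by (rule sum.cong) (simp_all add: w_def \<beta>m \<beta>i\<beta>)
      ultimately show ?thesis by simp
    qed
    have "sqrt (\<Sum>k<m. (w k - phi k x1)\<^sup>2) < e"
      using t e(1) unfolding sumeq Ob_def by (simp add: real_less_lsqrt)
    moreover have "w \<in> Rvec m" by (simp add: Rvec_def w_def)
    ultimately obtain x' where x': "x' \<in> W0" "w = (\<lambda>k. if k < m then phi k x' else 0)"
      using e(2) by blast
    then obtain y where y: "y \<in> ball y1 d0" "x' = \<Psi> y" unfolding W0_def by blast
    have wk: "t $ (\<beta>i k) = phi k (\<Psi> y)" if "k < m" for k
      using fun_cong[OF x'(2), of k] that y(2) by (simp add: w_def)
    define u where "u = (\<chi> i. if i \<in> I then y $ i else if i \<in> J then 0 else t $ i)"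
    have \<sigma>u: "\<sigma> u = \<sigma> y" by (simp add: \<sigma>_def u_def vec_eq_iff)
    have uS1: "u \<in> S1"
      unfolding S1_def using \<sigma>u \<sigma>ball[OF y(1)] i0 T(1) by (auto simp: u_def J_def)
    have "\<Theta> u = t"
    proof (subst vec_eq_iff, intro allI)
      fix i
      show "\<Theta> u $ i = t $ i"
      proof (cases "i \<in> J")
        case True
        have "\<Theta> u $ i = phi (\<beta> i) (\<Psi> (\<sigma> y))" using True by (simp add: \<Theta>_def \<sigma>u)
        also have "\<dots> = phi (\<beta> i) (\<Psi> y)" using const[OF y(1) \<beta>m[OF True]] by simp
        also have "\<dots> = t $ i" using wk[OF \<beta>m[OF True]] \<beta>i\<beta>[OF True] by simp
        finally show ?thesis .
      next
        case False
        then show ?thesis by (simp add: \<Theta>_def u_def J_def)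
      qed
    qed
    then show "t \<in> \<Theta> ` S1" using uS1 by blast
  qed
  then have "negligible Ob" using neg\<Theta> negligible_subset by blast
  then show False using nO by blast
qed



lemma seq_conv:
  fixes X :: "nat \<Rightarrow> 'a::metric_space"
  assumes "\<And>n. dist (X n) L < inverse (real (Suc n))"
  shows "X \<longlonglongrightarrow> L"
proof (rule metric_LIMSEQ_I)
  fix r :: real assume "0 < r"
  then obtain no where no: "inverse (real (Suc no)) < r" using reals_Archimedean by blast
  have "dist (X n) L < r" if "n \<ge> no" for n
  proof -
    have "inverse (real (Suc n)) \<le> inverse (real (Suc no))" using that by (simp add: field_simps)
    then show ?thesis using assms[of n] no by linarith
  qed
  then show "\<exists>no. \<forall>n\<ge>no. dist (X n) L < r" by blast
qed

theorem lemma3: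
  fixes f :: "real^'n \<Rightarrow> real^'n"
    and g :: "real^'n \<Rightarrow> real^'n"
    and h :: "real^'n \<Rightarrow> real"
    and S :: "(real^'n) set"
    and j :: nat
  assumes "smooth f" and "smooth g" and "smooth h"
    and "open S"
    and "2 \<le> j" and "j \<le> CARD('n)"
    and "open_map_on f h j S"
  shows "property_B f h S j"
proof -
  note sf = assms(1) and sh = assms(3) and oS = assms(4) and j2 = assms(5) and jn = assms(6)
    and om = assms(7)
  define phi where "phi k = lie_iter f k h" for k
  define gr where "gr k = grad (phi k)" for k
  have smp: "smooth (phi k)" for k unfolding phi_def using smooth_lie_iter[OF sf sh] .
  have der: "(phi k has_derivative (\<lambda>v. gr k x \<bullet> v)) (at x)" for k x
    unfolding gr_def using grad_deriv[OF smp] .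
  have cont: "continuous_on UNIV (gr k)" for k unfolding gr_def using grad_cont[OF smp] .
  have contphi: "continuous_on UNIV (phi k)" for k
    using smp[of k] unfolding smooth_def by (metis Ck.simps(1))
  have Hm: "Hmap f h j = (\<lambda>x. \<lambda>k. if k < j then phi k x else 0)"
    by (simp add: Hmap_def phi_def fun_eq_iff)
  have opnH: "\<exists>e>0. \<forall>w\<in>Rvec j. sqrt (\<Sum>k<j. (w k - phi k z)\<^sup>2) < e \<longrightarrow>
          w \<in> (\<lambda>x. \<lambda>k. if k < j then phi k x else 0) ` U'"
    if "open U'" "U' \<subseteq> S" "z \<in> U'" for U' z
  proof -
    have o: "open_Rvec j (Hmap f h j ` U')" using om that unfolding open_map_on_def by blast
    have "Hmap f h j z \<in> Hmap f h j ` U'" using that by blast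
    then obtain e where e: "e > 0" "\<forall>w\<in>Rvec j. sqrt (\<Sum>k<j. (w k - Hmap f h j z k)\<^sup>2) < e \<longrightarrow> w \<in> Hmap f h j ` U'"
      using o unfolding open_Rvec_def by blast
    have "(\<Sum>k<j. (w k - Hmap f h j z k)\<^sup>2) = (\<Sum>k<j. (w k - phi k z)\<^sup>2)" for w
      by (rule sum.cong) (simp_all add: Hm)
    then show ?thesis using e Hm by (intro exI[of _ e]) simp
  qed
  have FR: "\<exists>x\<in>U. jac_rank f h (j - 1) x = j - 1" if U: "open U" "U \<subseteq> S" "x0 \<in> U" for U x0
  proof (rule ccontr)
    assume nfr: "\<not> (\<exists>x\<in>U. jac_rank f h (j - 1) x = j - 1)"
    have rk: "dim ((\<lambda>k. gr k x) ` {..<j}) < j" if x: "x \<in> U" for x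
    proof -
      have jr: "jac_rank f h (j - 1) x = dim ((\<lambda>k. gr k x) ` {..<j - 1})"
        by (simp add: jac_rank_def gr_def phi_def)
      have "dim ((\<lambda>k. gr k x) ` {..<j - 1}) \<le> j - 1"
        by (metis card_image_le card_lessThan dim_le_card' finite_imageI finite_lessThan order_trans)
      then have lt: "dim ((\<lambda>k. gr k x) ` {..<j - 1}) < j - 1" using nfr x jr by force
      have "{..<j} = insert (j - 1) {..<j - 1}" using j2 by auto
      then have "(\<lambda>k. gr k x) ` {..<j} = insert (gr (j - 1) x) ((\<lambda>k. gr k x) ` {..<j - 1})" by simp
      then have "dim ((\<lambda>k. gr k x) ` {..<j}) \<le> dim ((\<lambda>k. gr k x) ` {..<j - 1}) + 1"
        by (simp add: dim_insert)
      then show ?thesis using lt by linarith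
    qed
    show False
      by (rule core[of phi gr U x0 j, OF der cont U(1) U(3) rk jn opnH])
         (use U in auto)
  qed
  show ?thesis unfolding property_B_def
  proof (intro ballI impI)
    fix xa xb assume xa: "xa \<in> S" and xb: "xb \<in> S" and eq: "xa \<noteq> xb \<and> Hmap f h j xa = Hmap f h j xb"
    have eqk: "phi k xa = phi k xb" if "k < j" for k
      using fun_cong[OF conjunct2[OF eq], of k] that by (simp add: Hm)
    have step: "\<exists>p. fst p \<in> S \<and> snd p \<in> S \<and> dist (fst p) xa < inverse (real (Suc n)) \<and>
        dist (snd p) xb < inverse (real (Suc n)) \<and> Hmap f h j (fst p) = Hmap f h j (snd p) \<and>
        jac_rank f h (j - 1) (fst p) = j - 1" for n
    proof -
      define \<epsilon> where "\<epsilon> = inverse (real (Suc n))"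
      have \<epsilon>: "\<epsilon> > 0" by (simp add: \<epsilon>_def)
      define Ub where "Ub = ball xb \<epsilon> \<inter> S"
      have oUb: "open Ub" using oS by (simp add: Ub_def open_Int)
      obtain e where e: "e > 0" "\<forall>w\<in>Rvec j. sqrt (\<Sum>k<j. (w k - phi k xb)\<^sup>2) < e \<longrightarrow>
          w \<in> (\<lambda>x. \<lambda>k. if k < j then phi k x else 0) ` Ub"
      proof -
        have "Ub \<subseteq> S" "xb \<in> Ub" using xb \<epsilon> by (auto simp: Ub_def)
        from opnH[OF oUb this] show ?thesis using that by blast
      qed
      define Ua where "Ua = ball xa \<epsilon> \<inter> S \<inter> {x. sqrt (\<Sum>k<j. (phi k x - phi k xb)\<^sup>2) < e}"
      have "open {x. sqrt (\<Sum>k<j. (phi k x - phi k xb)\<^sup>2) < e}"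
        by (rule open_Collect_less) (intro continuous_intros contphi)+
      then have oUa: "open Ua" using oS by (simp add: Ua_def open_Int)
      have "xa \<in> Ua" using xa \<epsilon> e(1) eqk by (simp add: Ua_def)
      moreover have "Ua \<subseteq> S" by (auto simp: Ua_def)
      ultimately obtain a where a: "a \<in> Ua" "jac_rank f h (j - 1) a = j - 1"
        using FR[OF oUa] by blast
      define w where "w = (\<lambda>k. if k < j then phi k a else 0)"
      have "w \<in> Rvec j" by (simp add: Rvec_def w_def)
      moreover have "(\<Sum>k<j. (w k - phi k xb)\<^sup>2) = (\<Sum>k<j. (phi k a - phi k xb)\<^sup>2)"
        by (rule sum.cong) (simp_all add: w_def)
      ultimately have "w \<in> (\<lambda>x. \<lambda>k. if k < j then phi k x else 0) ` Ub"
        using e(2) a(1) by (simp add: Ua_def)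
      then obtain b where b: "b \<in> Ub" "w = (\<lambda>k. if k < j then phi k b else 0)" by blast
      have "Hmap f h j a = Hmap f h j b" using b(2) by (simp add: Hm w_def)
      then show ?thesis using a b
        by (intro exI[of _ "(a, b)"]) (auto simp: Ua_def Ub_def \<epsilon>_def dist_commute)
    qed
    then obtain P where P: "\<forall>n. fst (P n) \<in> S \<and> snd (P n) \<in> S \<and> dist (fst (P n)) xa < inverse (real (Suc n)) \<and>
        dist (snd (P n)) xb < inverse (real (Suc n)) \<and> Hmap f h j (fst (P n)) = Hmap f h j (snd (P n)) \<and>
        jac_rank f h (j - 1) (fst (P n)) = j - 1"
      by metis
    show "\<exists>sa sb. (\<forall>k. sa k \<in> S \<and> sb k \<in> S) \<and> sa \<longlonglongrightarrow> xa \<and> sb \<longlonglongrightarrow> xb \<and>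
          (\<forall>k. Hmap f h j (sa k) = Hmap f h j (sb k) \<and>
               (jac_rank f h (j - 1) (sa k) = j - 1 \<or> jac_rank f h (j - 1) (sb k) = j - 1))"
    proof (intro exI conjI allI)
      show "(\<lambda>n. fst (P n)) \<longlonglongrightarrow> xa" by (rule seq_conv) (use P in blast)
      show "(\<lambda>n. snd (P n)) \<longlonglongrightarrow> xb" by (rule seq_conv) (use P in blast)
    qed (use P in auto)
  qed
qed


end
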